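(* Let $\rho$, $\bar\rho$, $\sigma$ be non-negative operators on a finite-dimensional Hilbert space, and suppose $\bar\rho\le\lambda\sigma$ for some $\lambda>0$. Then for every $\epsilon\in(0,\mathrm{tr}(\rho)]$, $$D_H^\epsilon(\rho\|\sigma)\le\log_2(\lambda)-\log_2\bigl(1-\Delta(\rho,\bar\rho)/\epsilon\bigr).$$
   Context: For non-negative operators $\rho,\sigma$ and $\epsilon\in(0,\mathrm{tr}(\rho)]$, the generalised relative entropy is defined by $2^{-D_H^\epsilon(\rho\|\sigma)}=\inf\{\mathrm{tr}(Q\sigma)/\epsilon:\ 0\le Q\le \mathrm{id},\ \mathrm{tr}(Q\rho)\ge\epsilon\}$ (with value $\infty$ if the infimum is $0$). The (generalised) trace distance of non-negative operators is $\Delta(\rho,\sigma)=\frac12\|\rho-\sigma\|_1+\frac12|\mathrm{tr}(\rho-\sigma)|$. *)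

theory Defs
  imports "Jordan_Normal_Form.Schur_Decomposition" "HOL-Library.Extended_Real"
begin

text \<open>Operators on the finite-dimensional Hilbert space C^n are n x n complex matrices.\<close>

definition mtrace :: "complex mat \<Rightarrow> complex" where
  "mtrace A = (\<Sum>i<dim_row A. A $$ (i, i))"

definition psd :: "nat \<Rightarrow> complex mat \<Rightarrow> bool" where
  "psd n A \<longleftrightarrow> A \<in> carrier_mat n n \<and> mat_adjoint A = A \<and>
     (\<forall>v \<in> carrier_vec n. Im (conjugate v \<bullet> (A *\<^sub>v v)) = 0 \<and> Re (conjugate v \<bullet> (A *\<^sub>v v)) \<ge> 0)"

definition loewner_le :: "nat \<Rightarrow> complex mat \<Rightarrow> complex mat \<Rightarrow> bool" where
  "loewner_le n A B \<longleftrightarrow> A \<in> carrier_mat n n \<and> B \<in> carrier_mat n n \<and> psd n (B - A)"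

definition eigvals :: "complex mat \<Rightarrow> complex list" where
  "eigvals A = (SOME as. char_poly A = (\<Prod>a\<leftarrow>as. [:- a, 1:]) \<and> length as = dim_row A)"

text \<open>Trace norm: sum of singular values, i.e. tr sqrt(X^* X).\<close>
definition trace_norm :: "complex mat \<Rightarrow> real" where
  "trace_norm X = (\<Sum>a\<leftarrow>eigvals (mat_adjoint X * X). sqrt (cmod a))"

definition gen_trace_dist :: "complex mat \<Rightarrow> complex mat \<Rightarrow> real" where
  "gen_trace_dist \<rho> \<sigma> = trace_norm (\<rho> - \<sigma>) / 2 + \<bar>Re (mtrace (\<rho> - \<sigma>))\<bar> / 2"

definition hyp_inf :: "nat \<Rightarrow> real \<Rightarrow> complex mat \<Rightarrow> complex mat \<Rightarrow> real" where
  "hyp_inf n eps \<rho> \<sigma> = Inf {Re (mtrace (Q * \<sigma>)) / eps | Q.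
      loewner_le n (0\<^sub>m n n) Q \<and> loewner_le n Q (1\<^sub>m n) \<and> Re (mtrace (Q * \<rho>)) \<ge> eps}"

definition DH :: "nat \<Rightarrow> real \<Rightarrow> complex mat \<Rightarrow> complex mat \<Rightarrow> ereal" where
  "DH n eps \<rho> \<sigma> = (if hyp_inf n eps \<rho> \<sigma> = 0 then \<infinity> else ereal (- log 2 (hyp_inf n eps \<rho> \<sigma>)))"

end

theory Submission
  imports Defs
begin

lemma adj_dim[simp]: "dim_row (mat_adjoint A) = dim_col A" "dim_col (mat_adjoint A) = dim_row A"
  by (auto simp: mat_adjoint_def)
lemma adj_index[simp]: "i < dim_col A \<Longrightarrow> j < dim_row A \<Longrightarrow> mat_adjoint A $$ (i,j) = cnj (A $$ (j,i))"
  by (auto simp: mat_adjoint_def mat_of_rows_def)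
lemma adj_carrier[simp]: "A \<in> carrier_mat n m \<Longrightarrow> mat_adjoint A \<in> carrier_mat m n"
  by auto

lemma adj_mult:
  fixes A B :: "complex mat"
  assumes "A \<in> carrier_mat n m" "B \<in> carrier_mat m p"
  shows "mat_adjoint (A * B) = mat_adjoint B * mat_adjoint A"
  using assms by (intro eq_matI) (auto simp: scalar_prod_def ac_simps)

lemma adj_vec:
  fixes A :: "complex mat"
  assumes "A \<in> carrier_mat n m" "x \<in> carrier_vec n" "y \<in> carrier_vec m"
  shows "conjugate x \<bullet> (A *\<^sub>v y) = conjugate (mat_adjoint A *\<^sub>v x) \<bullet> y"
proof -
  have "conjugate x \<bullet> (A *\<^sub>v y) = (\<Sum>i<n. cnj (x$i) * (\<Sum>k<m. A$$(i,k) * y$k))"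
    using assms by (auto simp: scalar_prod_def lessThan_atLeast0)
  also have "\<dots> = (\<Sum>k<m. (\<Sum>i<n. cnj (x$i) * A$$(i,k)) * y$k)"
    by (simp add: sum_distrib_left sum_distrib_right ac_simps) (rule sum.swap)
  also have "\<dots> = conjugate (mat_adjoint A *\<^sub>v x) \<bullet> y"
    using assms by (auto simp: scalar_prod_def lessThan_atLeast0 ac_simps)
  finally show ?thesis .
qed

lemma mtrace_cyc:
  fixes A B :: "complex mat"
  assumes "A \<in> carrier_mat n m" "B \<in> carrier_mat m n"
  shows "mtrace (A * B) = mtrace (B * A)"
proof -
  have "mtrace (A * B) = (\<Sum>i<n. \<Sum>k<m. A$$(i,k) * B$$(k,i))"
    using assms by (auto simp: mtrace_def scalar_prod_def lessThan_atLeast0)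
  also have "\<dots> = (\<Sum>k<m. \<Sum>i<n. B$$(k,i) * A$$(i,k))"
    by (subst sum.swap) (simp add: ac_simps)
  also have "\<dots> = mtrace (B * A)"
    using assms by (auto simp: mtrace_def scalar_prod_def lessThan_atLeast0)
  finally show ?thesis .
qed

lemma mtrace_minus: "A \<in> carrier_mat n n \<Longrightarrow> B \<in> carrier_mat n n \<Longrightarrow>
   mtrace (A - B) = mtrace A - mtrace (B :: complex mat)"
  by (auto simp: mtrace_def sum_subtractf)

lemma mtrace_smult: "A \<in> carrier_mat n n \<Longrightarrow> mtrace (c \<cdot>\<^sub>m A) = c * mtrace (A :: complex mat)"
  by (auto simp: mtrace_def sum_distrib_left)

lemma herm_zero:
  fixes M :: "complex mat"
  assumes M: "M \<in> carrier_mat n n" and h: "mat_adjoint M = M"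
    and ev: "\<And>mu. eigenvalue M mu \<Longrightarrow> mu = 0"
  shows "M = 0\<^sub>m n n"
proof -
  obtain es where cp: "char_poly M = (\<Prod>a\<leftarrow>es. [:- a, 1:])" and len: "length es = n"
    using char_poly_factorized[OF M] by blast
  obtain T P Q where sd: "schur_decomposition M es = (T,P,Q)" by (cases "schur_decomposition M es") auto
  from schur_decomposition[OF M cp sd] have sim: "similar_mat_wit M T P Q"
    and ut: "upper_triangular T" and dg: "diag_mat T = es" by auto
  note w = similar_mat_witD2[OF M sim]
  have T: "T \<in> carrier_mat n n" using w by auto
  have Tii: "T $$ (i,i) = 0" if i: "i < n" for i
  proof -
    have "T $$ (i,i) = es ! i" using dg[symmetric] i T by (auto simp: diag_mat_def)
    moreover have "es ! i \<in> set es" using i len by auto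
    hence "poly (char_poly M) (es ! i) = 0" unfolding cp
      by (induct es) (auto simp: poly_prod_list)
    hence "eigenvalue M (es ! i)" using eigenvalue_root_char_poly[OF M] by auto
    ultimately show ?thesis using ev by auto
  qed
  have TT: "(T * T) $$ (i,i) = 0" if i: "i < n" for i
  proof -
    have "(T * T) $$ (i,i) = (\<Sum>k<n. T$$(i,k) * T$$(k,i))"
      using T i by (auto simp: scalar_prod_def lessThan_atLeast0)
    also have "\<dots> = 0"
    proof (rule sum.neutral, intro ballI)
      fix k assume k: "k \<in> {..<n}"
      show "T$$(i,k) * T$$(k,i) = 0"
      proof (cases "k < i")
        case True thus ?thesis using ut T i by auto
      next
        case False
        show ?thesis
        proof (cases "k = i")
          case True thus ?thesis using Tii i by auto
        next
          case False2: False
          hence "i < k" using False by auto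
          hence "T$$(k,i) = 0" using ut T k by (auto simp: upper_triangular_def)
          thus ?thesis by simp
        qed
      qed
    qed
    finally show ?thesis .
  qed
  have P: "P \<in> carrier_mat n n" and Q: "Q \<in> carrier_mat n n" using w by auto
  have TQ: "T * Q \<in> carrier_mat n n" using T Q by auto
  have "M * M = P * (T * Q) * (P * (T * Q))" using w P T Q by (simp add: assoc_mult_mat[of _ n n])
  also have "\<dots> = P * ((T * Q) * (P * (T * Q)))" using P TQ by (intro assoc_mult_mat) auto
  also have "(T * Q) * (P * (T * Q)) = T * (Q * (P * (T * Q)))" using P T Q TQ by (intro assoc_mult_mat) auto
  also have "Q * (P * (T * Q)) = (Q * P) * (T * Q)" using P Q TQ by (intro assoc_mult_mat[symmetric]) auto
  also have "\<dots> = T * Q" using w TQ by simp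
  also have "T * (T * Q) = (T * T) * Q" using T Q by (intro assoc_mult_mat[symmetric]) auto
  finally have "mtrace (M * M) = mtrace (P * ((T * T) * Q))" by simp
  also have "\<dots> = mtrace (((T * T) * Q) * P)" by (rule mtrace_cyc[of _ n n]) (use P T Q in auto)
  also have "((T * T) * Q) * P = (T * T) * (Q * P)" using T Q P by (intro assoc_mult_mat) auto
  also have "\<dots> = T * T" using w T by simp
  also have "mtrace (T * T) = 0" using TT T by (auto simp: mtrace_def)
  finally have tr0: "mtrace (M * M) = 0" .
  have Mki: "M $$ (k,i) = cnj (M $$ (i,k))" if "i < n" "k < n" for i k
  proof -
    have "M $$ (k,i) = mat_adjoint M $$ (k,i)" using h by simp
    thus ?thesis using that M by auto
  qed
  have "mtrace (M * M) = (\<Sum>i<n. \<Sum>k<n. M$$(i,k) * M$$(k,i))"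
    using M by (auto simp: mtrace_def scalar_prod_def lessThan_atLeast0)
  also have "\<dots> = (\<Sum>i<n. \<Sum>k<n. of_real ((cmod (M$$(i,k)))\<^sup>2))"
  proof (intro sum.cong refl)
    fix i k assume "i \<in> {..<n}" "k \<in> {..<n}"
    thus "M$$(i,k) * M$$(k,i) = of_real ((cmod (M$$(i,k)))\<^sup>2)"
      using Mki[of i k] complex_norm_square[of "M$$(i,k)"] by simp
  qed
  also have "\<dots> = of_real (\<Sum>i<n. \<Sum>k<n. (cmod (M$$(i,k)))\<^sup>2)" by simp
  finally have eq: "mtrace (M * M) = of_real (\<Sum>i<n. \<Sum>k<n. (cmod (M$$(i,k)))\<^sup>2)" .
  hence "(\<Sum>i<n. \<Sum>k<n. (cmod (M$$(i,k)))\<^sup>2) = 0" using tr0 of_real_eq_0_iff by metis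
  hence z: "\<forall>i\<in>{..<n}. \<forall>k\<in>{..<n}. (cmod (M$$(i,k)))\<^sup>2 = 0"
    by (subst (asm) sum_nonneg_eq_0_iff) (auto intro!: sum_nonneg simp: sum_nonneg_eq_0_iff)
  show ?thesis using z M by (intro eq_matI) auto
qed

definition prj :: "nat \<Rightarrow> nat \<Rightarrow> (nat \<Rightarrow> complex vec) \<Rightarrow> complex mat" where
  "prj n k u = mat n n (\<lambda>(a,b). (if a = b then 1 else 0) - (\<Sum>i<k. u i $ a * cnj (u i $ b)))"

definition ON :: "nat \<Rightarrow> nat \<Rightarrow> (nat \<Rightarrow> complex vec) \<Rightarrow> bool" where
  "ON n k u \<longleftrightarrow> (\<forall>i<k. u i \<in> carrier_vec n) \<and>
     (\<forall>i<k. \<forall>j<k. conjugate (u i) \<bullet> u j = (if i = j then 1 else 0))"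

lemma prj_carrier[simp]: "prj n k u \<in> carrier_mat n n"
  unfolding prj_def by (rule mat_carrier)
lemma prj_dim[simp]: "dim_row (prj n k u) = n" "dim_col (prj n k u) = n"
  unfolding prj_def by simp_all
lemma prj_vec_carrier[simp]: "prj n k u *\<^sub>v v \<in> carrier_vec n"
  by (rule carrier_vecI) simp
lemma cip_sum: "x \<in> carrier_vec n \<Longrightarrow> y \<in> carrier_vec n \<Longrightarrow>
   conjugate x \<bullet> y = (\<Sum>b<n. cnj (x $ b) * y $ b)"
  by (auto simp: scalar_prod_def lessThan_atLeast0)
lemma cip_swap: "x \<in> carrier_vec n \<Longrightarrow> y \<in> carrier_vec n \<Longrightarrow>
   conjugate x \<bullet> y = cnj (conjugate y \<bullet> x)"
  by (simp add: cip_sum ac_simps)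

lemma prj_vec:
  assumes ON: "ON n k u" and v: "v \<in> carrier_vec n" and a: "a < n"
  shows "(prj n k u *\<^sub>v v) $ a = v $ a - (\<Sum>i<k. u i $ a * (conjugate (u i) \<bullet> v))"
proof -
  have ui: "\<And>i. i < k \<Longrightarrow> u i \<in> carrier_vec n" using ON by (auto simp: ON_def)
  have "(prj n k u *\<^sub>v v) $ a = (\<Sum>b<n. ((if a = b then 1 else 0) - (\<Sum>i<k. u i $ a * cnj (u i $ b))) * v $ b)"
    using v a by (auto simp: prj_def scalar_prod_def lessThan_atLeast0)
  also have "\<dots> = (\<Sum>b<n. (if a = b then 1 else 0) * v $ b) - (\<Sum>b<n. \<Sum>i<k. u i $ a * cnj (u i $ b) * v $ b)"
    by (simp add: left_diff_distrib sum_subtractf sum_distrib_right)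
  also have "(\<Sum>b<n. (if a = b then 1 else 0) * v $ b) = (\<Sum>b<n. if a = b then v $ b else 0)"
    by (intro sum.cong) auto
  also have "\<dots> = v $ a" using a by simp
  also have "(\<Sum>b<n. \<Sum>i<k. u i $ a * cnj (u i $ b) * v $ b) = (\<Sum>i<k. u i $ a * (conjugate (u i) \<bullet> v))"
    by (subst sum.swap) (auto intro!: sum.cong simp: cip_sum[OF ui v] sum_distrib_left ac_simps)
  finally show ?thesis .
qed

lemma prj_orth:
  assumes ON: "ON n k u" and v: "v \<in> carrier_vec n" and j: "j < k"
  shows "conjugate (u j) \<bullet> (prj n k u *\<^sub>v v) = 0"
proof -
  have ui: "\<And>i. i < k \<Longrightarrow> u i \<in> carrier_vec n" using ON by (auto simp: ON_def)
  have on: "\<And>i. i < k \<Longrightarrow> conjugate (u j) \<bullet> u i = (if j = i then 1 else 0)" using ON j by (auto simp: ON_def)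
  have "conjugate (u j) \<bullet> (prj n k u *\<^sub>v v) = (\<Sum>a<n. cnj (u j $ a) * (v $ a - (\<Sum>i<k. u i $ a * (conjugate (u i) \<bullet> v))))"
    by (subst cip_sum[OF ui[OF j] prj_vec_carrier], rule sum.cong[OF refl], subst prj_vec[OF ON v], auto)
  also have "\<dots> = (\<Sum>a<n. cnj (u j $ a) * v $ a) - (\<Sum>i<k. (\<Sum>a<n. cnj (u j $ a) * u i $ a) * (conjugate (u i) \<bullet> v))"
    by (simp add: right_diff_distrib sum_subtractf sum_distrib_left sum_distrib_right ac_simps)
       (rule sum.swap)
  also have "(\<Sum>a<n. cnj (u j $ a) * v $ a) = conjugate (u j) \<bullet> v" using cip_sum[OF ui[OF j] v] by simp
  also have "(\<Sum>i<k. (\<Sum>a<n. cnj (u j $ a) * u i $ a) * (conjugate (u i) \<bullet> v)) =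
     (\<Sum>i<k. (if j = i then 1 else 0) * (conjugate (u i) \<bullet> v))"
    by (intro sum.cong refl) (simp add: on cip_sum[OF ui[OF j] ui, symmetric])
  also have "\<dots> = (\<Sum>i<k. if j = i then conjugate (u i) \<bullet> v else 0)"
    by (intro sum.cong) auto
  also have "\<dots> = conjugate (u j) \<bullet> v" using j by simp
  finally show ?thesis by simp
qed

lemma prj_fix:
  assumes ON: "ON n k u" and v: "v \<in> carrier_vec n" and o: "\<And>j. j < k \<Longrightarrow> conjugate (u j) \<bullet> v = 0"
  shows "prj n k u *\<^sub>v v = v"
proof (rule eq_vecI)
  fix a assume "a < dim_vec v"
  hence a: "a < n" using v by auto
  show "(prj n k u *\<^sub>v v) $ a = v $ a" by (subst prj_vec[OF ON v a]) (simp add: o)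
qed (use v in auto)

lemma prj_herm: "mat_adjoint (prj n k u) = prj n k u"
  by (intro eq_matI) (auto simp: prj_def ac_simps)

lemma prj_trace:
  assumes ON: "ON n k u"
  shows "mtrace (prj n k u) = of_nat n - of_nat k"
proof -
  have ui: "\<And>i. i < k \<Longrightarrow> u i \<in> carrier_vec n" using ON by (auto simp: ON_def)
  have on: "\<And>i. i < k \<Longrightarrow> conjugate (u i) \<bullet> u i = 1" using ON by (auto simp: ON_def)
  have "mtrace (prj n k u) = (\<Sum>a<n. 1 - (\<Sum>i<k. u i $ a * cnj (u i $ a)))"
    by (simp add: mtrace_def prj_def)
  also have "\<dots> = of_nat n - (\<Sum>i<k. \<Sum>a<n. cnj (u i $ a) * u i $ a)"
    by (simp add: sum_subtractf ac_simps) (rule sum.swap)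
  also have "(\<Sum>i<k. \<Sum>a<n. cnj (u i $ a) * u i $ a) = (\<Sum>i<k. 1)"
    by (intro sum.cong refl) (simp add: on cip_sum[OF ui ui, symmetric])
  finally show ?thesis by simp
qed

lemma cip_self: "(w :: complex vec) \<in> carrier_vec n \<Longrightarrow> (conjugate w \<bullet> w = 0) = (w = 0\<^sub>v n)"
  using conjugate_vec_sprod_comm[of w n w] conjugate_square_eq_0_vec[of w n] by simp

lemma herm_eig_real:
  fixes A :: "complex mat"
  assumes A: "A \<in> carrier_mat n n" and h: "mat_adjoint A = A" and w: "w \<in> carrier_vec n"
    and w0: "w \<noteq> 0\<^sub>v n" and ev: "A *\<^sub>v w = mu \<cdot>\<^sub>v w"
  shows "mu = of_real (Re mu)"
proof -
  have c0: "conjugate w \<bullet> w \<noteq> 0" using cip_self[OF w] w0 by simp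
  have "conjugate w \<bullet> (A *\<^sub>v w) = mu * (conjugate w \<bullet> w)" using ev w by simp
  moreover have "conjugate w \<bullet> (A *\<^sub>v w) = conjugate (mat_adjoint A *\<^sub>v w) \<bullet> w"
    by (rule adj_vec[OF A w w])
  also have "\<dots> = cnj mu * (conjugate w \<bullet> w)" unfolding h ev conjugate_smult_vec using w by simp
  ultimately have "mu = cnj mu" using c0 by simp
  thus ?thesis by (simp add: complex_eq_iff)
qed

lemma A_pres:
  fixes A :: "complex mat"
  assumes A: "A \<in> carrier_mat n n" and h: "mat_adjoint A = A" and ON: "ON n k u"
    and eig: "\<And>i. i < k \<Longrightarrow> A *\<^sub>v u i = of_real (d i) \<cdot>\<^sub>v u i"
    and x: "x \<in> carrier_vec n" and o: "\<And>j. j < k \<Longrightarrow> conjugate (u j) \<bullet> x = 0"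
    and j: "j < k"
  shows "conjugate (u j) \<bullet> (A *\<^sub>v x) = 0"
proof -
  have uj: "u j \<in> carrier_vec n" using ON j by (auto simp: ON_def)
  have "conjugate (u j) \<bullet> (A *\<^sub>v x) = conjugate (mat_adjoint A *\<^sub>v u j) \<bullet> x"
    by (rule adj_vec[OF A uj x])
  also have "\<dots> = of_real (d j) * (conjugate (u j) \<bullet> x)"
    unfolding h eig[OF j] conjugate_smult_vec using uj x by simp
  finally show ?thesis using o[OF j] by simp
qed

lemma col_prj: "a < n \<Longrightarrow> b < n \<Longrightarrow> (prj n k u *\<^sub>v unit_vec n a) $ b = prj n k u $$ (b,a)"
proof -
  assume a: "a < n" and b: "b < n"
  have "(prj n k u *\<^sub>v unit_vec n a) $ b = (\<Sum>c<n. prj n k u $$ (b,c) * (if c = a then 1 else 0))"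
    using a b by (auto simp: scalar_prod_def lessThan_atLeast0 intro!: sum.cong)
  also have "\<dots> = (\<Sum>c<n. if c = a then prj n k u $$ (b,c) else 0)" by (intro sum.cong) auto
  also have "\<dots> = prj n k u $$ (b,a)" using a by simp
  finally show ?thesis .
qed

lemma step:
  fixes A :: "complex mat"
  assumes A: "A \<in> carrier_mat n n" and h: "mat_adjoint A = A" and ON: "ON n k u"
    and eig: "\<And>i. i < k \<Longrightarrow> A *\<^sub>v u i = of_real (d i) \<cdot>\<^sub>v u i" and k: "k < n"
  shows "\<exists>w mu. w \<in> carrier_vec n \<and> w \<noteq> 0\<^sub>v n \<and> (\<forall>j<k. conjugate (u j) \<bullet> w = 0) \<and> A *\<^sub>v w = mu \<cdot>\<^sub>v w"
proof -
  define P where "P = prj n k u"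
  define M where "M = P * A * P"
  have P: "P \<in> carrier_mat n n" unfolding P_def by simp
  have M: "M \<in> carrier_mat n n" unfolding M_def using P A by auto
  have PA: "P * A \<in> carrier_mat n n" using P A by auto
  have MH: "mat_adjoint M = M"
  proof -
    have "mat_adjoint M = mat_adjoint P * mat_adjoint (P * A)" unfolding M_def by (rule adj_mult[OF PA P])
    also have "mat_adjoint (P * A) = mat_adjoint A * mat_adjoint P" by (rule adj_mult[OF P A])
    also have "mat_adjoint P = P" unfolding P_def by (rule prj_herm)
    finally show ?thesis using P A h unfolding M_def by (simp add: assoc_mult_mat[of _ n n])
  qed
  have Mv: "M *\<^sub>v x = P *\<^sub>v (A *\<^sub>v (P *\<^sub>v x))" if x: "x \<in> carrier_vec n" for x
  proof -
    have "M *\<^sub>v x = (P * A) *\<^sub>v (P *\<^sub>v x)" unfolding M_def using PA P x by (rule assoc_mult_mat_vec)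
    also have "\<dots> = P *\<^sub>v (A *\<^sub>v (P *\<^sub>v x))" using P A x by (intro assoc_mult_mat_vec) auto
    finally show ?thesis .
  qed
  have PPo: "\<And>j. j < k \<Longrightarrow> conjugate (u j) \<bullet> (P *\<^sub>v x) = 0" if "x \<in> carrier_vec n" for x
    unfolding P_def using prj_orth[OF ON that] by blast
  have Pfix: "P *\<^sub>v x = x" if "x \<in> carrier_vec n" "\<And>j. j < k \<Longrightarrow> conjugate (u j) \<bullet> x = 0" for x
    unfolding P_def using prj_fix[OF ON that] .
  have APo: "\<And>j. j < k \<Longrightarrow> conjugate (u j) \<bullet> (A *\<^sub>v x) = 0"
    if "x \<in> carrier_vec n" "\<And>j. j < k \<Longrightarrow> conjugate (u j) \<bullet> x = 0" for x
    using A_pres[OF A h ON eig that] by blast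
  show ?thesis
  proof (cases "M = 0\<^sub>m n n")
    case True
    have "\<exists>a<n. P *\<^sub>v unit_vec n a \<noteq> 0\<^sub>v n"
    proof (rule ccontr)
      assume "\<not> ?thesis"
      hence z: "\<And>a. a < n \<Longrightarrow> P *\<^sub>v unit_vec n a = 0\<^sub>v n" by auto
      have "mtrace P = (\<Sum>a<n. (P *\<^sub>v unit_vec n a) $ a)"
        using P unfolding P_def by (auto simp: mtrace_def col_prj simp del: index_mult_mat_vec)
      also have "\<dots> = 0" using z by simp
      finally have "of_nat n - of_nat k = (0::complex)" using prj_trace[OF ON] unfolding P_def by simp
      thus False using k by simp
    qed
    then obtain a where a: "a < n" and w0: "P *\<^sub>v unit_vec n a \<noteq> 0\<^sub>v n" by auto
    define w where "w = P *\<^sub>v unit_vec n a"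
    have w: "w \<in> carrier_vec n" unfolding w_def using P by auto
    have ow: "\<And>j. j < k \<Longrightarrow> conjugate (u j) \<bullet> w = 0" unfolding w_def by (rule PPo) simp
    have "A *\<^sub>v w = P *\<^sub>v (A *\<^sub>v w)" using Pfix[of "A *\<^sub>v w"] APo[OF w ow] A w by simp
    also have "\<dots> = M *\<^sub>v unit_vec n a" using Mv[of "unit_vec n a"] unfolding w_def by simp
    also have "\<dots> = 0 \<cdot>\<^sub>v w" using True w by (intro eq_vecI) auto
    finally show ?thesis using w w0 ow unfolding w_def by blast
  next
    case False
    from herm_zero[OF M MH] False obtain mu where mu0: "mu \<noteq> 0" and evM: "eigenvalue M mu" by blast
    then obtain w where "eigenvector M w mu" unfolding eigenvalue_def by blast
    hence w: "w \<in> carrier_vec n" and w0: "w \<noteq> 0\<^sub>v n" and Mw: "M *\<^sub>v w = mu \<cdot>\<^sub>v w"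
      unfolding eigenvector_def using M by auto
    define y where "y = A *\<^sub>v (P *\<^sub>v w)"
    have y: "y \<in> carrier_vec n" unfolding y_def using A P w by auto
    have "mu \<cdot>\<^sub>v w = P *\<^sub>v y" using Mw Mv[OF w] unfolding y_def by simp
    hence "mu \<cdot>\<^sub>v (P *\<^sub>v w) = mu \<cdot>\<^sub>v w"
      using Pfix[of "P *\<^sub>v y"] PPo[OF y] P y w mult_mat_vec[OF P w, of mu] by simp
    hence Pw: "P *\<^sub>v w = w"
    proof (intro eq_vecI)
      fix i assume e: "mu \<cdot>\<^sub>v (P *\<^sub>v w) = mu \<cdot>\<^sub>v w" and i: "i < dim_vec w"
      have "(mu \<cdot>\<^sub>v (P *\<^sub>v w)) $ i = (mu \<cdot>\<^sub>v w) $ i" using e by simp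
      thus "(P *\<^sub>v w) $ i = w $ i" using i w P mu0 by (simp del: index_mult_mat_vec)
    qed (use P w in auto)
    have ow: "\<And>j. j < k \<Longrightarrow> conjugate (u j) \<bullet> w = 0" using PPo[OF w] Pw by simp
    have "A *\<^sub>v w = P *\<^sub>v (A *\<^sub>v w)" using Pfix[of "A *\<^sub>v w"] APo[OF w ow] A w by simp
    also have "\<dots> = M *\<^sub>v w" using Mv[OF w] Pw by simp
    also have "\<dots> = mu \<cdot>\<^sub>v w" by (rule Mw)
    finally show ?thesis using w w0 ow by blast
  qed
qed

lemma cip_pos:
  assumes w: "(w :: complex vec) \<in> carrier_vec n" and w0: "w \<noteq> 0\<^sub>v n"
  shows "Re (conjugate w \<bullet> w) > 0" "conjugate w \<bullet> w = of_real (Re (conjugate w \<bullet> w))"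
proof -
  have "0 < w \<bullet>c w" using conjugate_square_greater_0_vec[OF w] w0 by simp
  hence "0 < conjugate w \<bullet> w" using conjugate_vec_sprod_comm[OF w w] by simp
  thus "Re (conjugate w \<bullet> w) > 0" "conjugate w \<bullet> w = of_real (Re (conjugate w \<bullet> w))"
    by (auto simp: less_complex_def complex_eq_iff)
qed

lemma spectral_ON_k:
  fixes A :: "complex mat"
  assumes A: "A \<in> carrier_mat n n" and h: "mat_adjoint A = A"
  shows "k \<le> n \<Longrightarrow> \<exists>u d. ON n k u \<and> (\<forall>i<k. A *\<^sub>v u i = of_real (d i) \<cdot>\<^sub>v u i)"
proof (induct k)
  case 0 thus ?case by (auto simp: ON_def)
next
  case (Suc k)
  then obtain u d where ON: "ON n k u" and eig: "\<And>i. i < k \<Longrightarrow> A *\<^sub>v u i = of_real (d i) \<cdot>\<^sub>v u i"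
    by auto
  have k: "k < n" using Suc by auto
  obtain w mu where w: "w \<in> carrier_vec n" and w0: "w \<noteq> 0\<^sub>v n"
    and ow: "\<And>j. j < k \<Longrightarrow> conjugate (u j) \<bullet> w = 0" and Aw: "A *\<^sub>v w = mu \<cdot>\<^sub>v w"
    using step[OF A h ON eig k] by blast
  have mu: "mu = of_real (Re mu)" by (rule herm_eig_real[OF A h w w0 Aw])
  define r where "r = Re (conjugate w \<bullet> w)"
  have r: "r > 0" "conjugate w \<bullet> w = of_real r" using cip_pos[OF w w0] unfolding r_def by auto
  define c :: complex where "c = of_real (1 / sqrt r)"
  define w' where "w' = c \<cdot>\<^sub>v w"
  have w': "w' \<in> carrier_vec n" unfolding w'_def using w by simp
  have cc: "cnj c * c * of_real r = 1" unfolding c_def using r(1)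
    by (simp flip: of_real_mult)
  have n1: "conjugate w' \<bullet> w' = 1"
    unfolding w'_def conjugate_smult_vec using w r cc by (simp add: ac_simps)
  have ow': "conjugate (u j) \<bullet> w' = 0" if "j < k" for j
    unfolding w'_def using ow[OF that] w ON that by (simp add: ON_def)
  have Aw': "A *\<^sub>v w' = of_real (Re mu) \<cdot>\<^sub>v w'"
    unfolding w'_def using mult_mat_vec[OF A w, of c] Aw mu by (simp add: smult_smult_assoc mult.commute)
  define u' where "u' = u(k := w')"
  define d' where "d' = d(k := Re mu)"
  have ui: "\<And>i. i < k \<Longrightarrow> u i \<in> carrier_vec n" using ON by (auto simp: ON_def)
  have "ON n (Suc k) u'"
    unfolding ON_def
  proof (intro conjI allI impI)
    fix i assume "i < Suc k" thus "u' i \<in> carrier_vec n" using ui w' by (auto simp: u'_def less_Suc_eq)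
  next
    fix i j assume i: "i < Suc k" and j: "j < Suc k"
    show "conjugate (u' i) \<bullet> u' j = (if i = j then 1 else 0)"
    proof (cases "i = k")
      case True
      show ?thesis
      proof (cases "j = k")
        case True thus ?thesis using \<open>i = k\<close> n1 by (simp add: u'_def)
      next
        case False
        hence jk: "j < k" using j by auto
        have "conjugate w' \<bullet> u j = cnj (conjugate (u j) \<bullet> w')" by (rule cip_swap[OF w' ui[OF jk]])
        thus ?thesis using ow'[OF jk] \<open>i = k\<close> False by (simp add: u'_def)
      qed
    next
      case False
      hence ik: "i < k" using i by auto
      show ?thesis
      proof (cases "j = k")
        case True thus ?thesis using ow'[OF ik] ik by (simp add: u'_def)
      next
        case False
        hence jk: "j < k" using j by auto
        thus ?thesis using ON ik jk \<open>i \<noteq> k\<close> False by (simp add: u'_def ON_def)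
      qed
    qed
  qed
  moreover have "\<forall>i<Suc k. A *\<^sub>v u' i = of_real (d' i) \<cdot>\<^sub>v u' i"
    using eig Aw' by (auto simp: u'_def d'_def less_Suc_eq)
  ultimately show ?case by blast
qed

definition umat :: "nat \<Rightarrow> (nat \<Rightarrow> complex vec) \<Rightarrow> complex mat" where
  "umat n u = mat n n (\<lambda>(a,i). u i $ a)"
definition dmat :: "nat \<Rightarrow> (nat \<Rightarrow> complex) \<Rightarrow> complex mat" where
  "dmat n e = mat n n (\<lambda>(i,j). if i = j then e i else 0)"

lemma umat_carrier[simp]: "umat n u \<in> carrier_mat n n" unfolding umat_def by (rule mat_carrier)
lemma dmat_carrier[simp]: "dmat n e \<in> carrier_mat n n" unfolding dmat_def by (rule mat_carrier)
lemma umat_index[simp]: "a < n \<Longrightarrow> i < n \<Longrightarrow> umat n u $$ (a,i) = u i $ a" unfolding umat_def by simp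
lemma dmat_index[simp]: "i < n \<Longrightarrow> j < n \<Longrightarrow> dmat n e $$ (i,j) = (if i = j then e i else 0)"
  unfolding dmat_def by simp
lemma umat_dim[simp]: "dim_row (umat n u) = n" "dim_col (umat n u) = n" unfolding umat_def by simp_all
lemma dmat_dim[simp]: "dim_row (dmat n e) = n" "dim_col (dmat n e) = n" unfolding dmat_def by simp_all

lemma umat_unitary:
  assumes ON: "ON n n u"
  shows "mat_adjoint (umat n u) * umat n u = 1\<^sub>m n" "umat n u * mat_adjoint (umat n u) = 1\<^sub>m n"
proof -
  have ui: "\<And>i. i < n \<Longrightarrow> u i \<in> carrier_vec n" using ON by (auto simp: ON_def)
  show 1: "mat_adjoint (umat n u) * umat n u = 1\<^sub>m n"
  proof (rule eq_matI)
    fix i j assume i: "i < dim_row (1\<^sub>m n :: complex mat)" and j: "j < dim_col (1\<^sub>m n :: complex mat)"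
    have "(mat_adjoint (umat n u) * umat n u) $$ (i,j) = (\<Sum>a<n. cnj (u i $ a) * u j $ a)"
      using i j by (auto simp: scalar_prod_def lessThan_atLeast0 intro!: sum.cong)
    also have "\<dots> = conjugate (u i) \<bullet> u j" using i j by (simp add: cip_sum[OF ui ui])
    also have "\<dots> = 1\<^sub>m n $$ (i,j)" using ON i j by (auto simp: ON_def)
    finally show "(mat_adjoint (umat n u) * umat n u) $$ (i,j) = 1\<^sub>m n $$ (i,j)" .
  qed auto
  show "umat n u * mat_adjoint (umat n u) = 1\<^sub>m n"
    by (rule mat_mult_left_right_inverse[OF _ _ 1]) auto
qed

lemma eig_decomp:
  assumes ON: "ON n n u" and B: "B \<in> carrier_mat n n"
    and eig: "\<And>i. i < n \<Longrightarrow> B *\<^sub>v u i = e i \<cdot>\<^sub>v u i"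
  shows "B = umat n u * dmat n e * mat_adjoint (umat n u)"
proof -
  let ?U = "umat n u" and ?D = "dmat n e"
  have ui: "\<And>i. i < n \<Longrightarrow> u i \<in> carrier_vec n" using ON by (auto simp: ON_def)
  have BU: "B * ?U = ?U * ?D"
  proof (rule eq_matI)
    fix a i assume a: "a < dim_row (?U * ?D)" and i: "i < dim_col (?U * ?D)"
    have "(B * ?U) $$ (a,i) = (B *\<^sub>v u i) $ a"
      using a i B ui[of i] by (auto simp: scalar_prod_def intro!: sum.cong)
    also have "\<dots> = e i * u i $ a" using eig[of i] i a ui[of i] by simp
    also have "\<dots> = (\<Sum>j<n. u j $ a * (if j = i then e i else 0))"
      using i by (simp add: if_distrib cong: if_cong)
    also have "\<dots> = (?U * ?D) $$ (a,i)" using a i by (auto simp: scalar_prod_def lessThan_atLeast0 intro!: sum.cong)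
    finally show "(B * ?U) $$ (a,i) = (?U * ?D) $$ (a,i)" .
  qed (use B in auto)
  have "B = B * (?U * mat_adjoint ?U)" using umat_unitary[OF ON] B by simp
  also have "\<dots> = (B * ?U) * mat_adjoint ?U" by (rule assoc_mult_mat[symmetric]) (use B in auto)
  finally show ?thesis unfolding BU .
qed

lemma eig_entry:
  assumes ON: "ON n n u" and B: "B \<in> carrier_mat n n"
    and eig: "\<And>i. i < n \<Longrightarrow> B *\<^sub>v u i = e i \<cdot>\<^sub>v u i" and a: "a < n" and b: "b < n"
  shows "B $$ (a,b) = (\<Sum>i<n. u i $ a * e i * cnj (u i $ b))"
proof -
  let ?U = "umat n u" and ?D = "dmat n e"
  have UD: "(?U * ?D) $$ (a,c) = u c $ a * e c" if c: "c < n" for c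
  proof -
    have "(?U * ?D) $$ (a,c) = (\<Sum>j<n. u j $ a * (if j = c then e c else 0))"
      using a c by (auto simp: scalar_prod_def lessThan_atLeast0 intro!: sum.cong)
    also have "\<dots> = u c $ a * e c" using c by (simp add: if_distrib cong: if_cong)
    finally show ?thesis .
  qed
  have "B $$ (a,b) = (?U * ?D * mat_adjoint ?U) $$ (a,b)" using eig_decomp[OF ON B eig] by simp
  also have "\<dots> = row (?U * ?D) a \<bullet> col (mat_adjoint ?U) b" using a b by (intro index_mult_mat) auto
  also have "\<dots> = (\<Sum>i<n. u i $ a * e i * cnj (u i $ b))"
    using a b by (auto simp: scalar_prod_def lessThan_atLeast0 UD simp del: index_mult_mat(1) row_mult intro!: sum.cong)
  finally show ?thesis .
qed

lemma trace_eig: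
  assumes ON: "ON n n u" and X: "X \<in> carrier_mat n n"
    and eig: "\<And>i. i < n \<Longrightarrow> X *\<^sub>v u i = e i \<cdot>\<^sub>v u i" and Q: "Q \<in> carrier_mat n n"
  shows "mtrace (Q * X) = (\<Sum>i<n. e i * (conjugate (u i) \<bullet> (Q *\<^sub>v u i)))"
proof -
  have ui: "\<And>i. i < n \<Longrightarrow> u i \<in> carrier_vec n" using ON by (auto simp: ON_def)
  have "mtrace (Q * X) = (\<Sum>a<n. \<Sum>b<n. Q $$ (a,b) * X $$ (b,a))"
    using Q X by (auto simp: mtrace_def scalar_prod_def lessThan_atLeast0)
  also have "\<dots> = (\<Sum>a<n. \<Sum>b<n. Q $$ (a,b) * (\<Sum>i<n. u i $ b * e i * cnj (u i $ a)))"
    by (intro sum.cong refl) (simp add: eig_entry[OF ON X eig])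
  also have "\<dots> = (\<Sum>a<n. \<Sum>i<n. \<Sum>b<n. e i * (cnj (u i $ a) * (Q $$ (a,b) * u i $ b)))"
    by (rule sum.cong[OF refl], simp only: sum_distrib_left, subst sum.swap,
        rule sum.cong[OF refl], rule sum.cong[OF refl], simp add: ac_simps)
  also have "\<dots> = (\<Sum>i<n. \<Sum>a<n. \<Sum>b<n. e i * (cnj (u i $ a) * (Q $$ (a,b) * u i $ b)))"
    by (rule sum.swap)
  also have "\<dots> = (\<Sum>i<n. e i * (conjugate (u i) \<bullet> (Q *\<^sub>v u i)))"
  proof (intro sum.cong refl)
    fix i assume i: "i \<in> {..<n}"
    have "conjugate (u i) \<bullet> (Q *\<^sub>v u i) = (\<Sum>a<n. cnj (u i $ a) * (Q *\<^sub>v u i) $ a)"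
      using Q ui[of i] i by (intro cip_sum) auto
    also have "\<dots> = (\<Sum>a<n. cnj (u i $ a) * (\<Sum>b<n. Q $$ (a,b) * u i $ b))"
      using Q ui[of i] i by (intro sum.cong refl) (auto simp: scalar_prod_def lessThan_atLeast0)
    finally show "(\<Sum>a<n. \<Sum>b<n. e i * (cnj (u i $ a) * (Q $$ (a,b) * u i $ b))) =
       e i * (conjugate (u i) \<bullet> (Q *\<^sub>v u i))"
      by (simp add: sum_distrib_left)
  qed
  finally show ?thesis .
qed

lemma prod_lin_mset:
  fixes as bs :: "complex list"
  shows "(\<Prod>a\<leftarrow>as. [:- a, 1:]) = (\<Prod>a\<leftarrow>bs. [:- a, 1:]) \<Longrightarrow> mset as = mset bs"
proof (induct as arbitrary: bs)
  case Nil
  show ?case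
  proof (cases bs)
    case (Cons b bs')
    have "degree (\<Prod>a\<leftarrow>bs. [:- a, 1:]) = length bs"
      by (subst degree_prod_list_eq) (auto simp: o_def sum_list_triv)
    with Nil Cons show ?thesis by simp
  qed simp
next
  case (Cons a as)
  have "poly (\<Prod>x\<leftarrow>bs. [:- x, 1:]) a = 0" using Cons(2)[symmetric] by (simp add: poly_prod_list)
  hence "a \<in> set bs" by (auto simp: poly_prod_list prod_list_zero_iff)
  hence "(\<Prod>x\<leftarrow>bs. [:- x, 1:]) = [:- a, 1:] * (\<Prod>x\<leftarrow>remove1 a bs. [:- x, 1:])"
    by (rule prod_list_map_remove1)
  with Cons(2) have "[:- a, 1:] * (\<Prod>x\<leftarrow>as. [:- x, 1:]) = [:- a, 1:] * (\<Prod>x\<leftarrow>remove1 a bs. [:- x, 1:])"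
    by (simp only: list.map prod_list.Cons)
  hence "(\<Prod>x\<leftarrow>as. [:- x, 1:]) = (\<Prod>x\<leftarrow>remove1 a bs. [:- x, 1:])"
    by (subst (asm) mult_cancel_left) simp
  from Cons(1)[OF this] \<open>a \<in> set bs\<close> show ?case by simp
qed

lemma sum_list_mset_eq: "mset xs = mset ys \<Longrightarrow> sum_list (map f xs) = (sum_list (map f ys) :: real)"
  by (metis mset_map sum_mset_sum_list)

lemma herm_tn:
  fixes A :: "complex mat"
  assumes A: "A \<in> carrier_mat n n" and h: "mat_adjoint A = A" and ON: "ON n n u"
    and eig: "\<And>i. i < n \<Longrightarrow> A *\<^sub>v u i = of_real (d i) \<cdot>\<^sub>v u i"
  shows "trace_norm A = (\<Sum>i<n. \<bar>d i\<bar>)"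
proof -
  have ui: "\<And>i. i < n \<Longrightarrow> u i \<in> carrier_vec n" using ON by (auto simp: ON_def)
  define B where "B = mat_adjoint A * A"
  have B: "B \<in> carrier_mat n n" unfolding B_def using A by auto
  define e where "e = (\<lambda>i. (of_real (d i ^ 2) :: complex))"
  have eigB: "B *\<^sub>v u i = e i \<cdot>\<^sub>v u i" if i: "i < n" for i
  proof -
    have "B *\<^sub>v u i = A *\<^sub>v (A *\<^sub>v u i)" unfolding B_def h using A ui[OF i] by simp
    also have "\<dots> = of_real (d i) \<cdot>\<^sub>v (of_real (d i) \<cdot>\<^sub>v u i)"
      using eig[OF i] mult_mat_vec[OF A ui[OF i]] by simp
    also have "\<dots> = e i \<cdot>\<^sub>v u i" unfolding e_def by (simp add: smult_smult_assoc power2_eq_square)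
    finally show ?thesis .
  qed
  let ?U = "umat n u" and ?D = "dmat n e"
  have sim: "similar_mat B ?D"
    by (rule similar_matI[of B ?D ?U "mat_adjoint ?U" n], insert B umat_unitary[OF ON] eig_decomp[OF ON B eigB], auto)
  have ut: "upper_triangular ?D" by (auto simp: upper_triangular_def)
  define es where "es = map e [0..<n]"
  have dg: "diag_mat ?D = es" unfolding es_def diag_mat_def by (intro map_cong) auto
  have cp: "char_poly B = (\<Prod>a\<leftarrow>es. [:- a, 1:])"
    using char_poly_similar[OF sim] char_poly_upper_triangular[OF dmat_carrier ut] dg by simp
  have "\<exists>as. char_poly B = (\<Prod>a\<leftarrow>as. [:- a, 1:]) \<and> length as = dim_row B"
    using cp B by (intro exI[of _ es]) (auto simp: es_def)
  hence "char_poly B = (\<Prod>a\<leftarrow>eigvals B. [:- a, 1:])"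
    unfolding eigvals_def by (rule someI_ex[THEN conjunct1])
  hence ms: "mset (eigvals B) = mset es" using cp by (intro prod_lin_mset) simp
  have "trace_norm A = (\<Sum>a\<leftarrow>es. sqrt (cmod a))"
    unfolding trace_norm_def B_def[symmetric] by (rule sum_list_mset_eq[OF ms])
  also have "\<dots> = (\<Sum>i<n. sqrt (cmod (e i)))" unfolding es_def
    by (simp add: sum_list_sum_nth lessThan_atLeast0)
  also have "\<dots> = (\<Sum>i<n. \<bar>d i\<bar>)" unfolding e_def by (simp add: norm_power flip: of_real_power)
  finally show ?thesis .
qed

lemma spectral:
  fixes A :: "complex mat"
  assumes A: "A \<in> carrier_mat n n" and h: "mat_adjoint A = A"
  shows "\<exists>u d. ON n n u \<and> (\<forall>i<n. A *\<^sub>v u i = of_real (d i) \<cdot>\<^sub>v u i)"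
  using spectral_ON_k[OF A h, of n] by simp

lemma adj_minus: "A \<in> carrier_mat n m \<Longrightarrow> B \<in> carrier_mat n m \<Longrightarrow>
  mat_adjoint (A - B) = mat_adjoint A - mat_adjoint (B :: complex mat)"
  by (intro eq_matI) auto

lemma psd_quad: "psd n A \<Longrightarrow> v \<in> carrier_vec n \<Longrightarrow> Re (conjugate v \<bullet> (A *\<^sub>v v)) \<ge> 0"
  unfolding psd_def by auto

lemma loewner0: "loewner_le n (0\<^sub>m n n) Q \<Longrightarrow> psd n Q"
proof -
  assume "loewner_le n (0\<^sub>m n n) Q"
  hence Q: "Q \<in> carrier_mat n n" and p: "psd n (Q - 0\<^sub>m n n)" unfolding loewner_le_def by auto
  have "Q - 0\<^sub>m n n = Q" using Q by (intro eq_matI) auto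
  thus "psd n Q" using p by simp
qed

lemma coef_bounds:
  assumes Q0: "loewner_le n (0\<^sub>m n n) Q" and Q1: "loewner_le n Q (1\<^sub>m n)"
    and v: "v \<in> carrier_vec n" and v1: "conjugate v \<bullet> v = 1"
  shows "0 \<le> Re (conjugate v \<bullet> (Q *\<^sub>v v))" "Re (conjugate v \<bullet> (Q *\<^sub>v v)) \<le> 1"
proof -
  have Q: "Q \<in> carrier_mat n n" using Q1 unfolding loewner_le_def by auto
  show "0 \<le> Re (conjugate v \<bullet> (Q *\<^sub>v v))" using psd_quad[OF loewner0[OF Q0] v] .
  have p: "psd n (1\<^sub>m n - Q)" using Q1 unfolding loewner_le_def by auto
  have "(1\<^sub>m n - Q) *\<^sub>v v = 1\<^sub>m n *\<^sub>v v - Q *\<^sub>v v" by (rule minus_mult_distrib_mat_vec[OF _ Q v]) simp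
  hence "(1\<^sub>m n - Q) *\<^sub>v v = v - Q *\<^sub>v v" using v by simp
  hence "conjugate v \<bullet> ((1\<^sub>m n - Q) *\<^sub>v v) = 1 - conjugate v \<bullet> (Q *\<^sub>v v)"
    using v Q v1 by (simp add: scalar_prod_minus_distrib[of _ n])
  thus "Re (conjugate v \<bullet> (Q *\<^sub>v v)) \<le> 1" using psd_quad[OF p v] by simp
qed

lemma key_ineq:
  fixes X Q :: "complex mat"
  assumes X: "X \<in> carrier_mat n n" and h: "mat_adjoint X = X"
    and Q0: "loewner_le n (0\<^sub>m n n) Q" and Q1: "loewner_le n Q (1\<^sub>m n)"
  shows "Re (mtrace (Q * X)) \<le> (trace_norm X + Re (mtrace X)) / 2"
proof -
  have Q: "Q \<in> carrier_mat n n" using Q1 unfolding loewner_le_def by auto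
  obtain u d where ON: "ON n n u" and eig: "\<And>i. i < n \<Longrightarrow> X *\<^sub>v u i = of_real (d i) \<cdot>\<^sub>v u i"
    using spectral[OF X h] by blast
  have ui: "\<And>i. i < n \<Longrightarrow> u i \<in> carrier_vec n" using ON by (auto simp: ON_def)
  have u1: "\<And>i. i < n \<Longrightarrow> conjugate (u i) \<bullet> u i = 1" using ON by (auto simp: ON_def)
  define c where "c i = Re (conjugate (u i) \<bullet> (Q *\<^sub>v u i))" for i
  have c: "\<And>i. i < n \<Longrightarrow> 0 \<le> c i \<and> c i \<le> 1" unfolding c_def using coef_bounds[OF Q0 Q1 ui u1] by auto
  have "Re (mtrace (Q * X)) = (\<Sum>i<n. d i * c i)"
    using trace_eig[OF ON X eig Q] unfolding c_def by (simp add: Re_sum)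
  also have "\<dots> \<le> (\<Sum>i<n. (\<bar>d i\<bar> + d i) / 2)"
  proof (rule sum_mono)
    fix i assume "i \<in> {..<n}"
    hence ci: "0 \<le> c i" "c i \<le> 1" using c by auto
    show "d i * c i \<le> (\<bar>d i\<bar> + d i) / 2"
    proof (cases "d i \<ge> 0")
      case True thus ?thesis using ci mult_left_le[of "c i" "d i"] by simp
    next
      case False thus ?thesis using ci mult_nonpos_nonneg[of "d i" "c i"] by simp
    qed
  qed
  also have "\<dots> = ((\<Sum>i<n. \<bar>d i\<bar>) + (\<Sum>i<n. d i)) / 2" by (simp add: sum.distrib flip: sum_divide_distrib)
  also have "(\<Sum>i<n. \<bar>d i\<bar>) = trace_norm X" using herm_tn[OF X h ON eig] by simp
  also have "(\<Sum>i<n. d i) = Re (mtrace X)"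
  proof -
    have "mtrace X = mtrace (1\<^sub>m n * X)" using X by simp
    also have "\<dots> = (\<Sum>i<n. of_real (d i) * (conjugate (u i) \<bullet> (1\<^sub>m n *\<^sub>v u i)))"
      by (rule trace_eig[OF ON X eig], simp, rule one_carrier_mat)
    also have "\<dots> = (\<Sum>i<n. of_real (d i))" using ui u1 by (intro sum.cong refl) simp
    finally show ?thesis by (simp add: Re_sum)
  qed
  finally show ?thesis .
qed

lemma psd_trace_nonneg:
  fixes P Q :: "complex mat"
  assumes P: "psd n P" and Q0: "loewner_le n (0\<^sub>m n n) Q"
  shows "Re (mtrace (Q * P)) \<ge> 0"
proof -
  have Pc: "P \<in> carrier_mat n n" and h: "mat_adjoint P = P" using P unfolding psd_def by auto
  have Q: "Q \<in> carrier_mat n n" using Q0 unfolding loewner_le_def by auto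
  obtain u d where ON: "ON n n u" and eig: "\<And>i. i < n \<Longrightarrow> P *\<^sub>v u i = of_real (d i) \<cdot>\<^sub>v u i"
    using spectral[OF Pc h] by blast
  have ui: "\<And>i. i < n \<Longrightarrow> u i \<in> carrier_vec n" using ON by (auto simp: ON_def)
  have u1: "\<And>i. i < n \<Longrightarrow> conjugate (u i) \<bullet> u i = 1" using ON by (auto simp: ON_def)
  have d: "d i \<ge> 0" if i: "i < n" for i
  proof -
    have "conjugate (u i) \<bullet> (P *\<^sub>v u i) = of_real (d i)" using eig[OF i] ui[OF i] u1[OF i] by simp
    thus ?thesis using psd_quad[OF P ui[OF i]] by simp
  qed
  have "Re (mtrace (Q * P)) = (\<Sum>i<n. d i * Re (conjugate (u i) \<bullet> (Q *\<^sub>v u i)))"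
    using trace_eig[OF ON Pc eig Q] by (simp add: Re_sum)
  also have "\<dots> \<ge> 0" using d psd_quad[OF loewner0[OF Q0] ui] by (intro sum_nonneg) simp
  finally show ?thesis .
qed

lemma psd_one: "psd n (1\<^sub>m n - 0\<^sub>m n n)"
proof -
  have e: "1\<^sub>m n - 0\<^sub>m n n = (1\<^sub>m n :: complex mat)" by (intro eq_matI) auto
  have "mat_adjoint (1\<^sub>m n :: complex mat) = 1\<^sub>m n" by (intro eq_matI) auto
  moreover have "Im (conjugate v \<bullet> (1\<^sub>m n *\<^sub>v v)) = 0 \<and> Re (conjugate v \<bullet> (1\<^sub>m n *\<^sub>v v)) \<ge> 0"
    if v: "v \<in> carrier_vec n" for v :: "complex vec"
  proof -
    have "0 \<le> v \<bullet>c v" by (rule conjugate_square_ge_0_vec)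
    hence "0 \<le> conjugate v \<bullet> v" using conjugate_vec_sprod_comm[OF v v] by simp
    thus ?thesis using v by (simp add: less_eq_complex_def)
  qed
  ultimately show ?thesis unfolding e psd_def by auto
qed

lemma psd_zero: "psd n (1\<^sub>m n - 1\<^sub>m n)"
proof -
  have e: "1\<^sub>m n - 1\<^sub>m n = (0\<^sub>m n n :: complex mat)" by (intro eq_matI) auto
  have "mat_adjoint (0\<^sub>m n n :: complex mat) = 0\<^sub>m n n" by (intro eq_matI) auto
  moreover have "0\<^sub>m n n *\<^sub>v v = 0\<^sub>v n" if "v \<in> carrier_vec n" for v :: "complex vec"
    using that by (intro eq_vecI) (auto simp: scalar_prod_def)
  ultimately show ?thesis unfolding e psd_def by auto
qed

theorem lemmaA5:
  fixes n :: nat and \<rho> \<rho>' \<sigma> :: "complex mat" and lam eps :: real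
  assumes "psd n \<rho>" and "psd n \<rho>'" and "psd n \<sigma>"
    and "lam > 0" and "loewner_le n \<rho>' (lam \<cdot>\<^sub>m \<sigma>)"
    and "eps > 0" and "eps \<le> Re (mtrace \<rho>)"
  shows "DH n eps \<rho> \<sigma> \<le>
    (if gen_trace_dist \<rho> \<rho>' < eps
     then ereal (log 2 lam - log 2 (1 - gen_trace_dist \<rho> \<rho>' / eps))
     else \<infinity>)"
proof (cases "gen_trace_dist \<rho> \<rho>' < eps")
  case False thus ?thesis by simp
next
  case True
  define Dt where "Dt = gen_trace_dist \<rho> \<rho>'"
  have Dt: "Dt < eps" using True unfolding Dt_def .
  have rho: "\<rho> \<in> carrier_mat n n" and hr: "mat_adjoint \<rho> = \<rho>" using assms(1) unfolding psd_def by auto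
  have rho': "\<rho>' \<in> carrier_mat n n" and hr': "mat_adjoint \<rho>' = \<rho>'" using assms(2) unfolding psd_def by auto
  have sig: "\<sigma> \<in> carrier_mat n n" using assms(3) unfolding psd_def by auto
  have P: "psd n (lam \<cdot>\<^sub>m \<sigma> - \<rho>')" using assms(5) unfolding loewner_le_def by auto
  define X where "X = \<rho> - \<rho>'"
  have X: "X \<in> carrier_mat n n" unfolding X_def using rho rho' by auto
  have hX: "mat_adjoint X = X" unfolding X_def using adj_minus[OF rho rho'] hr hr' by simp
  define S where "S = {Re (mtrace (Q * \<sigma>)) / eps | Q.
      loewner_le n (0\<^sub>m n n) Q \<and> loewner_le n Q (1\<^sub>m n) \<and> Re (mtrace (Q * \<rho>)) \<ge> eps}"
  have hS: "hyp_inf n eps \<rho> \<sigma> = Inf S" unfolding hyp_inf_def S_def ..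
  define b where "b = (eps - Dt) / (lam * eps)"
  have b0: "b > 0" unfolding b_def using Dt assms(4,6) by simp
  have bound: "b \<le> s" if "s \<in> S" for s
  proof -
    obtain Q where s: "s = Re (mtrace (Q * \<sigma>)) / eps" and Q0: "loewner_le n (0\<^sub>m n n) Q"
      and Q1: "loewner_le n Q (1\<^sub>m n)" and Qr: "Re (mtrace (Q * \<rho>)) \<ge> eps"
      using \<open>s \<in> S\<close> unfolding S_def by blast
    have Q: "Q \<in> carrier_mat n n" using Q1 unfolding loewner_le_def by auto
    have ls: "complex_of_real lam \<cdot>\<^sub>m \<sigma> \<in> carrier_mat n n" using sig by simp
    have "Q * (lam \<cdot>\<^sub>m \<sigma> - \<rho>') = Q * (lam \<cdot>\<^sub>m \<sigma>) - Q * \<rho>'"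
      by (rule mult_minus_distrib_mat[OF Q ls rho'])
    also have "Q * (lam \<cdot>\<^sub>m \<sigma>) = of_real lam \<cdot>\<^sub>m (Q * \<sigma>)" by (rule mult_smult_distrib[OF Q sig])
    finally have "mtrace (Q * (lam \<cdot>\<^sub>m \<sigma> - \<rho>')) = mtrace (of_real lam \<cdot>\<^sub>m (Q * \<sigma>)) - mtrace (Q * \<rho>')"
      using Q sig rho' by (simp add: mtrace_minus[of _ n])
    also have "mtrace (of_real lam \<cdot>\<^sub>m (Q * \<sigma>)) = of_real lam * mtrace (Q * \<sigma>)"
      using Q sig by (intro mtrace_smult[of _ n]) auto
    finally have "mtrace (Q * (lam \<cdot>\<^sub>m \<sigma> - \<rho>')) = of_real lam * mtrace (Q * \<sigma>) - mtrace (Q * \<rho>')" .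
    hence t1: "Re (mtrace (Q * \<rho>')) \<le> lam * Re (mtrace (Q * \<sigma>))"
      using psd_trace_nonneg[OF P Q0] by simp
    have "mtrace (Q * X) = mtrace (Q * \<rho>) - mtrace (Q * \<rho>')"
      unfolding X_def using Q rho rho' by (simp add: mult_minus_distrib_mat[of _ n n] mtrace_minus[of _ n])
    moreover have "Re (mtrace (Q * X)) \<le> Dt"
      using key_ineq[OF X hX Q0 Q1] unfolding Dt_def gen_trace_dist_def X_def by simp
    ultimately have t2: "Re (mtrace (Q * \<rho>)) \<le> Re (mtrace (Q * \<rho>')) + Dt" by simp
    have "eps - Dt \<le> lam * Re (mtrace (Q * \<sigma>))" using t1 t2 Qr by simp
    hence "(eps - Dt) / lam \<le> Re (mtrace (Q * \<sigma>))" using assms(4) by (simp add: divide_le_eq mult.commute)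
    hence "(eps - Dt) / lam / eps \<le> Re (mtrace (Q * \<sigma>)) / eps" using assms(6) by (intro divide_right_mono) auto
    thus ?thesis unfolding s b_def by (simp add: mult.commute)
  qed
  have ne: "S \<noteq> {}"
  proof -
    have "Re (mtrace (1\<^sub>m n * \<sigma>)) / eps \<in> S" unfolding S_def
      using psd_one psd_zero rho assms(7) by (auto simp: loewner_le_def)
    thus ?thesis by blast
  qed
  have h: "b \<le> hyp_inf n eps \<rho> \<sigma>" unfolding hS using ne bound by (rule cInf_greatest)
  hence hpos: "hyp_inf n eps \<rho> \<sigma> > 0" using b0 by simp
  have "log 2 b \<le> log 2 (hyp_inf n eps \<rho> \<sigma>)" using h b0 by simp
  moreover have "log 2 b = log 2 (1 - Dt / eps) - log 2 lam"
  proof -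
    have "b = (1 - Dt / eps) / lam" unfolding b_def using assms(6) by (simp add: field_simps)
    moreover have "1 - Dt / eps > 0" using Dt assms(6) by simp
    ultimately show ?thesis using assms(4) Dt log_divide[of 2 "1 - Dt / eps" lam] by simp
  qed
  ultimately have "- log 2 (hyp_inf n eps \<rho> \<sigma>) \<le> log 2 lam - log 2 (1 - Dt / eps)" by simp
  thus ?thesis using True hpos unfolding DH_def Dt_def by simp
qed

end
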